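(* Let $v:\mathbb{T}\to\mathbb{R}$ be a real-valued function on the unit circle $\mathbb{T}=\{|w|=1\}$ which is analytic (i.e. extends holomorphically to an open neighborhood of $\mathbb{T}$). Let $\mathsf{T}(v)=\pi_\bullet v\,\pi_\bullet$ be the Toeplitz operator with symbol $v$ on the Hardy space $H_\bullet$, and $\mathsf{T}_+(v)=\pi_+ v\,\pi_+$. Then the spectral shift function $\xi_{\mathsf{T}_+(v)/\mathsf{T}(v)}$ of $\mathsf{T}(v)$ at the vacuum vector $|0\rangle=w^0$ is $$2\pi\cdot \xi_{\mathsf{T}_+(v)/\mathsf{T}(v)}(c)=(v_*d\theta)\big((-\infty,c)\big),$$ i.e. $\xi_{\mathsf{T}_+(v)/\mathsf{T}(v)}(c)=\frac{1}{2\pi}\,\mathrm{Leb}\{\theta\in[0,2\pi):v(e^{\mathbf{i}\theta})<c\}$ is the distribution function of the push-forward along $v$ of the normalized uniform (Haar) measure on $\mathbb{T}$.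
   Context: $L^2(\mathbb{T})$ carries the pairing $\langle f,g\rangle=\frac{1}{2\pi\mathbf{i}}\oint_{|w|=1}\overline{f(w)}g(w)\frac{dw}{w}$. The Hardy space $H_\bullet$ is the closure of $\mathbb{C}[w]$ in $L^2(\mathbb{T})$; $\pi_\bullet$ is the orthogonal projection of $L^2(\mathbb{T})$ onto $H_\bullet$ (killing negative powers of $w$), $\pi_0=|0\rangle\langle 0|$ is projection onto the constants, and $\pi_+=\pi_\bullet-\pi_0$ is projection onto the closed span of $w^h$, $h\ge 1$. For a bounded self-adjoint $T$ on $H_\bullet$ and $T_+=\pi_+T\pi_+$, the operators $T^l-T_+^l$ are trace class, and the spectral shift function $\xi_{T_+/T}$ is the distribution function satisfying $\mathrm{Tr}(T^l-T_+^l)=\int_{-\infty}^\infty c^l\,d\xi_{T_+/T}(c)$ for all $l\in\mathbb{N}$ (equivalently $\langle 0|(u-T)^{-1}|0\rangle=\exp\big(\int\log\frac{1}{u-c}\,d\xi_{T_+/T}(c)\big)$). *)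

theory Defs
  imports "HOL-Complex_Analysis.Complex_Analysis"
begin

text \<open>Infinite matrices indexed by nat x nat represent operators on the Hardy space
  H_bullet in its orthonormal basis w^0, w^1, w^2, ...  (index j stands for w^j).\<close>

type_synonym imat = "nat \<Rightarrow> nat \<Rightarrow> complex"

definition fourier_coeff :: "(complex \<Rightarrow> real) \<Rightarrow> int \<Rightarrow> complex" where
  "fourier_coeff v n =
     integral {0..2*pi} (\<lambda>\<theta>. complex_of_real (v (cis \<theta>)) * cis (- (of_int n * \<theta>))) / complex_of_real (2*pi)"

text \<open>Matrix of the Toeplitz operator T(v) = pi_bullet v pi_bullet:
  entry (j,k) is <w^j | v w^k> = hat v (j - k).\<close>
definition toeplitz_mat :: "(complex \<Rightarrow> real) \<Rightarrow> imat" where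
  "toeplitz_mat v j k = fourier_coeff v (int j - int k)"

text \<open>Matrix of T_+(v) = pi_+ T(v) pi_+ (pi_+ kills the basis vector w^0).\<close>
definition toeplitz_plus_mat :: "(complex \<Rightarrow> real) \<Rightarrow> imat" where
  "toeplitz_plus_mat v j k = (if 1 \<le> j \<and> 1 \<le> k then toeplitz_mat v j k else 0)"

definition imat_mult :: "imat \<Rightarrow> imat \<Rightarrow> imat" where
  "imat_mult A B j k = (\<Sum>m. A j m * B m k)"

definition imat_id :: imat where
  "imat_id j k = (if j = k then 1 else 0)"

fun imat_pow :: "imat \<Rightarrow> nat \<Rightarrow> imat" where
  "imat_pow A 0 = imat_id"
| "imat_pow A (Suc l) = imat_mult (imat_pow A l) A"

definition analytic_on_circle :: "(complex \<Rightarrow> real) \<Rightarrow> bool" where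
  "analytic_on_circle v \<longleftrightarrow>
     (\<exists>S g. open S \<and> sphere 0 1 \<subseteq> S \<and> g holomorphic_on S \<and>
            (\<forall>w\<in>sphere 0 1. g w = complex_of_real (v w)))"

definition ssf_claim :: "(complex \<Rightarrow> real) \<Rightarrow> real \<Rightarrow> real" where
  "ssf_claim v c = measure lborel {\<theta>\<in>{0..<2*pi}. v (cis \<theta>) < c} / (2*pi)"

end

theory Submission
  imports Defs
begin

lemma annulus_exists:
  assumes "open S" "sphere (0::complex) 1 \<subseteq> S"
  obtains e where "0 < e" "e < 1" "\<And>z. 1 - e < norm z \<Longrightarrow> norm z < 1 + e \<Longrightarrow> z \<in> S"
proof -
  obtain \<epsilon> where ep: "\<epsilon> > 0" "(\<Union>x\<in>sphere (0::complex) 1. ball x \<epsilon>) \<subseteq> S"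
    using compact_subset_open_imp_ball_epsilon_subset[OF compact_sphere assms(1) assms(2)] by blast
  define e where "e = min \<epsilon> (1/2)"
  have "0 < e" "e < 1" using ep by (auto simp: e_def)
  moreover have "z \<in> S" if "1 - e < norm z" "norm z < 1 + e" for z
  proof -
    have nz: "norm z > 0" using that \<open>e < 1\<close> by linarith
    define x where "x = z / of_real (norm z)"
    have x: "x \<in> sphere 0 1" using nz by (simp add: x_def norm_divide)
    have "z - x = of_real (norm z - 1) * x" using nz by (simp add: x_def field_simps)
    have "dist x z = norm (z - x)" by (simp add: dist_norm norm_minus_commute)
    also have "\<dots> = norm (of_real (norm z - 1) * x)" by (simp only: \<open>z - x = _\<close>)
    also have "\<dots> = \<bar>norm z - 1\<bar>" using x by (simp only: norm_mult norm_of_real) simp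
    also have "\<dots> < e" using that by auto
    finally have "z \<in> ball x \<epsilon>" using e_def by (simp add: dist_commute)
    thus ?thesis using ep x by blast
  qed
  ultimately show ?thesis using that by blast
qed

lemma circle_homotopy:
  assumes hol: "f holomorphic_on A" and A: "open A"
    and sub: "\<And>z. r1 \<le> norm z \<Longrightarrow> norm z \<le> r2 \<Longrightarrow> z \<in> A" and r: "0 < r1" "r1 \<le> r2"
  shows "contour_integral (circlepath 0 r1) f = contour_integral (circlepath 0 r2) f"
proof (rule Cauchy_theorem_homotopic_loops[OF _ A hol])
  show "homotopic_loops A (circlepath 0 r1) (circlepath 0 r2)"
  proof (rule homotopic_loops_linear)
    fix t :: real assume "t \<in> {0..1}"
    show "closed_segment (circlepath 0 r1 t) (circlepath 0 r2 t) \<subseteq> A"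
    proof
      fix x assume "x \<in> closed_segment (circlepath 0 r1 t) (circlepath 0 r2 t)"
      then obtain u where u: "0 \<le> u" "u \<le> 1"
        and x: "x = (1 - u) *\<^sub>R circlepath 0 r1 t + u *\<^sub>R circlepath 0 r2 t"
        by (auto simp: closed_segment_def)
      define E where "E = exp (2 * of_real pi * \<i> * of_real t)"
      have nE: "norm E = 1" by (simp add: E_def)
      have "x = of_real ((1-u)*r1 + u*r2) * E"
        by (simp add: x circlepath E_def scaleR_conv_of_real algebra_simps)
      hence "norm x = norm (of_real ((1-u)*r1 + u*r2) :: complex) * norm E"
        by (simp only: norm_mult)
      also have "\<dots> = \<bar>(1-u)*r1 + u*r2\<bar>" by (simp only: norm_of_real nE mult_1_right)
      also have "\<bar>(1-u)*r1 + u*r2\<bar> = (1-u)*r1 + u*r2" 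
        using u r by (intro abs_of_nonneg add_nonneg_nonneg mult_nonneg_nonneg) auto
      finally have nx: "norm x = (1-u)*r1 + u*r2" .
      have "u*r1 \<le> u*r2" "(1-u)*r1 \<le> (1-u)*r2" using u r by (intro mult_left_mono; simp)+
      moreover have "(1-u)*r1 + u*r2 = r1 - u*r1 + u*r2" "(1-u)*r2 + u*r2 = r2" by (simp_all add: algebra_simps)
      ultimately have "r1 \<le> (1-u)*r1 + u*r2" "(1-u)*r1 + u*r2 \<le> r2" by linarith+
      then show "x \<in> A" using sub nx by simp
    qed
  qed auto
qed auto

lemma contour_geom_series:
  fixes f p :: "complex \<Rightarrow> complex"
  assumes r: "0 < r" and cf: "continuous_on (sphere 0 r) f" and cp: "continuous_on (sphere 0 r) p"
    and q: "0 \<le> q" "q < 1" and pq: "\<And>u. u \<in> sphere 0 r \<Longrightarrow> norm (p u) \<le> q"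
  shows "(\<lambda>k. contour_integral (circlepath 0 r) (\<lambda>u. f u * p u ^ k)) sums
           contour_integral (circlepath 0 r) (\<lambda>u. f u / (1 - p u))"
proof -
  obtain B where B: "0 < B" "\<And>u. u \<in> sphere 0 r \<Longrightarrow> norm (f u) \<le> B"
    using compact_continuous_image[OF cf compact_sphere]
    by (metis (no_types, lifting) bounded_pos compact_imp_bounded image_eqI)
  have p1: "p u \<noteq> 1" if "u \<in> sphere 0 r" for u
    using pq[OF that] q by auto
  have geo: "(\<Sum>k<n. f u * p u ^ k) - f u / (1 - p u) = - (f u * p u ^ n / (1 - p u))"
    if "u \<in> sphere 0 r" for u n
  proof -
    have ne: "1 - p u \<noteq> 0" using p1[OF that] by auto
    have gs: "(\<Sum>k<n. p u ^ k) = (1 - p u ^ n) / (1 - p u)"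
    proof -
      have "p u - 1 \<noteq> 0" using p1[OF that] by auto
      thus ?thesis using geometric_sum[OF p1[OF that], of n] ne
        by (simp add: field_simps)
    qed
    have "(\<Sum>k<n. f u * p u ^ k) = f u * ((1 - p u ^ n) / (1 - p u))"
      by (simp add: sum_distrib_left[symmetric] gs)
    also have "\<dots> - f u / (1 - p u) = (f u * (1 - p u ^ n) - f u) / (1 - p u)"
      by (metis diff_divide_distrib times_divide_eq_right)
    also have "\<dots> = - (f u * p u ^ n / (1 - p u))"
      by (simp add: algebra_simps)
    finally show ?thesis .
  qed
  have ul: "uniform_limit (sphere 0 r) (\<lambda>n u. \<Sum>k<n. f u * p u ^ k) (\<lambda>u. f u / (1 - p u)) sequentially"
  proof (rule uniform_limitI)
    fix e :: real assume e: "e > 0"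
    have "(\<lambda>n. B * q ^ n / (1 - q)) \<longlonglongrightarrow> B * 0 / (1 - q)"
      using q by (intro tendsto_intros LIMSEQ_power_zero) auto
    hence "\<forall>\<^sub>F n in sequentially. B * q ^ n / (1 - q) < e"
      using e by (simp add: order_tendstoD(2))
    thus "\<forall>\<^sub>F n in sequentially. \<forall>u\<in>sphere (0::complex) r. dist (\<Sum>k<n. f u * p u ^ k) (f u / (1 - p u)) < e"
    proof eventually_elim
      case (elim n)
      show ?case
      proof
        fix u :: complex assume u: "u \<in> sphere 0 r"
        have "dist (\<Sum>k<n. f u * p u ^ k) (f u / (1 - p u)) = norm (f u) * norm (p u) ^ n / norm (1 - p u)"
          by (simp add: dist_norm geo[OF u] norm_mult norm_divide norm_power)
        also have "\<dots> \<le> B * q ^ n / (1 - q)"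
        proof (intro frac_le mult_mono power_mono)
          show "1 - q \<le> norm (1 - p u)"
            using norm_triangle_ineq2[of 1 "p u"] pq[OF u] by (simp add: norm_minus_commute) 
        qed (use B u pq q in auto)
        finally show "dist (\<Sum>k<n. f u * p u ^ k) (f u / (1 - p u)) < e" using elim by linarith
      qed
    qed
  qed
  have ci: "(\<lambda>u. f u * p u ^ k) contour_integrable_on circlepath 0 r" for k
    using r by (intro contour_integrable_continuous_circlepath continuous_intros)
       (auto intro: continuous_on_subset[OF cf] continuous_on_subset[OF cp])
  have "((\<lambda>n. contour_integral (circlepath 0 r) (\<lambda>u. \<Sum>k<n. f u * p u ^ k)) \<longlongrightarrow>
         contour_integral (circlepath 0 r) (\<lambda>u. f u / (1 - p u))) sequentially"
    by (rule contour_integral_uniform_limit_circlepath[OF _ ul])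
       (use r ci in \<open>auto intro!: contour_integrable_sum always_eventually\<close>)
  moreover have "contour_integral (circlepath 0 r) (\<lambda>u. \<Sum>k<n. f u * p u ^ k) =
                 (\<Sum>k<n. contour_integral (circlepath 0 r) (\<lambda>u. f u * p u ^ k))" for n
    by (rule contour_integral_sum) (use ci in auto)
  ultimately show ?thesis by (simp add: sums_def)
qed

lemma annulus_cauchy:
  fixes g :: "complex \<Rightarrow> complex"
  assumes A: "open A" and hol: "g holomorphic_on A"
   and sub: "\<And>z. r1 \<le> norm z \<Longrightarrow> norm z \<le> R2 \<Longrightarrow> z \<in> A" and r: "0 < r1" "r1 < norm w" "norm w < R2"
  shows "2*pi*\<i> * g w = contour_integral (circlepath 0 R2) (\<lambda>u. g u/(u-w))
                        - contour_integral (circlepath 0 r1) (\<lambda>u. g u/(u-w))"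
proof -
  have wA: "w \<in> A" using sub r by auto
  define h where "h = (\<lambda>u. if u = w then deriv g w else (g u - g w)/(u-w))"
  have hh: "h holomorphic_on A" unfolding h_def
    by (rule pole_lemma[OF hol]) (simp add: interior_open[OF A] wA)
  have eq: "contour_integral (circlepath 0 r1) h = contour_integral (circlepath 0 R2) h"
    by (rule circle_homotopy[OF hh A sub]) (use r in auto)
  have gen: "contour_integral (circlepath 0 \<rho>) h = contour_integral (circlepath 0 \<rho>) (\<lambda>u. g u/(u-w))
              - g w * contour_integral (circlepath 0 \<rho>) (\<lambda>u. 1/(u-w))"
    if "0 < \<rho>" "sphere 0 \<rho> \<subseteq> A" "norm w \<noteq> \<rho>" for \<rho>
  proof -
    have nw: "u \<noteq> w" if "u \<in> sphere 0 \<rho>" for u using that \<open>norm w \<noteq> \<rho>\<close> by auto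
    have cg: "continuous_on (sphere 0 \<rho>) g"
      using holomorphic_on_imp_continuous_on[OF hol] that(2) continuous_on_subset by blast
    have i1: "(\<lambda>u. g u/(u-w)) contour_integrable_on circlepath 0 \<rho>"
      using that nw by (intro contour_integrable_continuous_circlepath) 
        (auto intro!: continuous_intros cg)
    have i2: "(\<lambda>u. 1/(u-w)) contour_integrable_on circlepath 0 \<rho>"
      using that nw by (intro contour_integrable_continuous_circlepath) 
        (auto intro!: continuous_intros)
    have "contour_integral (circlepath 0 \<rho>) h = 
          contour_integral (circlepath 0 \<rho>) (\<lambda>u. g u/(u-w) - g w * (1/(u-w)))"
      by (rule contour_integral_eq) (use that nw in \<open>auto simp: h_def diff_divide_distrib\<close>)
    also have "\<dots> = contour_integral (circlepath 0 \<rho>) (\<lambda>u. g u/(u-w))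
              - g w * contour_integral (circlepath 0 \<rho>) (\<lambda>u. 1/(u-w))"
      by (subst contour_integral_diff[OF i1 contour_integrable_lmul[OF i2]])
         (simp only: contour_integral_lmul[OF i2])
    finally show ?thesis .
  qed
  have sR: "sphere 0 R2 \<subseteq> A" "sphere 0 r1 \<subseteq> A" using sub r by auto
  have I1: "contour_integral (circlepath 0 R2) (\<lambda>u. 1/(u-w)) = 2*pi*\<i>"
    using contour_integral_unique[OF Cauchy_integral_circlepath_simple[of "\<lambda>_. 1" 0 R2 w]] r
    by simp
  have I2: "contour_integral (circlepath 0 r1) (\<lambda>u. 1/(u-w)) = 0"
  proof (rule contour_integral_unique, rule Cauchy_theorem_convex_simple[of _ "ball 0 (norm w)"])
    show "(\<lambda>u. 1 / (u - w)) holomorphic_on ball 0 (cmod w)"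
      by (intro holomorphic_intros) auto
  qed (use r in auto)
  show ?thesis
    using eq gen[of r1] gen[of R2] sR r I1 I2 by (simp add: algebra_simps)
qed

lemma sphere_bound:
  fixes g :: "complex \<Rightarrow> complex"
  assumes "continuous_on (sphere 0 r) g"
  obtains B where "0 \<le> B" "\<And>u. u \<in> sphere 0 r \<Longrightarrow> norm (g u) \<le> B"
  using compact_continuous_image[OF assms compact_sphere]
  by (metis (no_types, lifting) bounded_pos compact_imp_bounded image_eqI less_le_not_le)

lemma laurent_circle:
  fixes g :: "complex \<Rightarrow> complex"
  assumes S: "open S" "sphere 0 1 \<subseteq> S" and hol: "g holomorphic_on S"
  defines "\<alpha> \<equiv> \<lambda>k::nat. contour_integral (circlepath 0 1) (\<lambda>u. g u / u^Suc k) / (2*pi*\<i>)"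
     and "\<beta> \<equiv> \<lambda>k::nat. contour_integral (circlepath 0 1) (\<lambda>u. g u * u^k) / (2*pi*\<i>)"
  obtains \<rho> M where "0 < \<rho>" "\<rho> < 1" "0 \<le> M" "\<And>k. norm (\<alpha> k) \<le> M * \<rho>^k"
    "\<And>k. norm (\<beta> k) \<le> M * \<rho>^Suc k"
    "\<And>w. norm w = 1 \<Longrightarrow> (\<lambda>k. \<alpha> k * w^k) sums (\<Sum>k. \<alpha> k * w^k) \<and>
          (\<lambda>k. \<beta> k / w^Suc k) sums (\<Sum>k. \<beta> k / w^Suc k) \<and>
          g w = (\<Sum>k. \<alpha> k * w^k) + (\<Sum>k. \<beta> k / w^Suc k)"
proof -
  obtain e where e: "0 < e" "e < 1" "\<And>z. 1 - e < norm z \<Longrightarrow> norm z < 1 + e \<Longrightarrow> z \<in> S"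
    using annulus_exists[OF S] by blast
  define A where "A = ball (0::complex) (1+e) - cball 0 (1-e)"
  have A: "open A" unfolding A_def by auto
  have memA: "z \<in> A \<longleftrightarrow> 1 - e < norm z \<and> norm z < 1 + e" for z
    by (auto simp: A_def)
  have holA: "g holomorphic_on A" using hol e(3) memA holomorphic_on_subset by blast
  define r1 where "r1 = 1 - e/2"
  define R2 where "R2 = 1 + e/2"
  have r: "0 < r1" "r1 < 1" "1 < R2" using e by (auto simp: r1_def R2_def)
  have subA: "z \<in> A" if "r1 \<le> norm z" "norm z \<le> R2" for z
    using that e by (auto simp: memA r1_def R2_def)
  have hom1: "contour_integral (circlepath 0 r1) f = contour_integral (circlepath 0 1) f"
    if "f holomorphic_on A" for f
    by (rule circle_homotopy[OF that A]) (use r subA in auto)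
  have hom2: "contour_integral (circlepath 0 1) f = contour_integral (circlepath 0 R2) f"
    if "f holomorphic_on A" for f
    by (rule circle_homotopy[OF that A]) (use r subA in auto)
  have nz: "0 \<notin> A" using e by (simp add: memA)
  have hf1: "(\<lambda>u. g u / u^Suc k) holomorphic_on A" for k
    using nz by (intro holomorphic_intros holA) auto
  have hf2: "(\<lambda>u. g u * u^k) holomorphic_on A" for k
    by (intro holomorphic_intros holA)
  have \<alpha>R: "\<alpha> k = contour_integral (circlepath 0 R2) (\<lambda>u. g u / u^Suc k) / (2*pi*\<i>)" for k
    unfolding \<alpha>_def hom2[OF hf1] ..
  have \<beta>r: "\<beta> k = contour_integral (circlepath 0 r1) (\<lambda>u. g u * u^k) / (2*pi*\<i>)" for k
    unfolding \<beta>_def hom1[OF hf2] ..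
  have cgA: "continuous_on A g" using holA holomorphic_on_imp_continuous_on by blast
  have sR: "sphere 0 R2 \<subseteq> A" "sphere 0 r1 \<subseteq> A" using subA r by auto
  have cgR: "continuous_on (sphere 0 R2) g" and cgr: "continuous_on (sphere 0 r1) g"
    using cgA sR continuous_on_subset by blast+
  obtain B2 where B2: "0 \<le> B2" "\<And>u. u \<in> sphere 0 R2 \<Longrightarrow> norm (g u) \<le> B2"
    using sphere_bound[OF cgR] by blast
  obtain B1 where B1: "0 \<le> B1" "\<And>u. u \<in> sphere 0 r1 \<Longrightarrow> norm (g u) \<le> B1"
    using sphere_bound[OF cgr] by blast
  define \<rho> where "\<rho> = max r1 (1/R2)"
  define M where "M = max B1 B2"
  have \<rho>: "0 < \<rho>" "\<rho> < 1" using r by (auto simp: \<rho>_def)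
  have M: "0 \<le> M" using B1 by (auto simp: M_def)
  have ci1: "(\<lambda>u. g u / u^Suc k) contour_integrable_on circlepath 0 R2" for k
    using r by (intro contour_integrable_continuous_circlepath continuous_intros
        continuous_on_subset[OF cgR]) auto
  have ci2: "(\<lambda>u. g u * u^k) contour_integrable_on circlepath 0 r1" for k
    using r by (intro contour_integrable_continuous_circlepath continuous_intros
        continuous_on_subset[OF cgr]) auto
  have bd\<alpha>: "norm (\<alpha> k) \<le> M * \<rho>^k" for k
  proof -
    have "norm (contour_integral (circlepath 0 R2) (\<lambda>u. g u / u^Suc k)) \<le> (B2 / R2^Suc k) * (2*pi*R2)"
    proof (rule has_contour_integral_bound_circlepath[OF has_contour_integral_integral[OF ci1]])
      fix x :: complex assume "norm (x - 0) = R2"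
      hence "norm (g x) \<le> B2" "norm (x^Suc k) = R2^Suc k" using B2 by (auto simp: norm_power norm_mult)
      thus "norm (g x / x^Suc k) \<le> B2 / R2^Suc k"
        by (simp only: norm_divide) (rule divide_right_mono, use r in auto)
    qed (use B2 r in auto)
    also have "\<dots> = 2*pi * (B2 * (1/R2)^k)" using r by (simp add: field_simps)
    finally have "norm (\<alpha> k) \<le> B2 * (1/R2)^k"
      unfolding \<alpha>R using pi_gt_zero by (simp add: norm_divide norm_mult pos_divide_le_eq mult_ac)
    also have "\<dots> \<le> M * \<rho>^k"
      using r B2 by (intro mult_mono power_mono) (auto simp: M_def \<rho>_def)
    finally show ?thesis .
  qed
  have bd\<beta>: "norm (\<beta> k) \<le> M * \<rho>^Suc k" for k
  proof -
    have "norm (contour_integral (circlepath 0 r1) (\<lambda>u. g u * u^k)) \<le> (B1 * r1^k) * (2*pi*r1)"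
    proof (rule has_contour_integral_bound_circlepath[OF has_contour_integral_integral[OF ci2]])
      fix x :: complex assume "norm (x - 0) = r1"
      thus "norm (g x * x^k) \<le> B1 * r1^k"
        using B1 by (auto simp: norm_mult norm_power intro!: mult_right_mono)
    qed (use B1 r in auto)
    also have "\<dots> = 2*pi * (B1 * r1^Suc k)" using r by (simp add: field_simps)
    finally have "norm (\<beta> k) \<le> B1 * r1^Suc k"
      unfolding \<beta>r using pi_gt_zero by (simp add: norm_divide norm_mult pos_divide_le_eq mult_ac)
    also have "\<dots> \<le> M * \<rho>^Suc k"
      using r B1 by (intro mult_mono power_mono) (auto simp: M_def \<rho>_def simp del: power_Suc)
    finally show ?thesis .
  qed
  have rep: "(\<lambda>k. \<alpha> k * w^k) sums (\<Sum>k. \<alpha> k * w^k) \<and>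
          (\<lambda>k. \<beta> k / w^Suc k) sums (\<Sum>k. \<beta> k / w^Suc k) \<and>
          g w = (\<Sum>k. \<alpha> k * w^k) + (\<Sum>k. \<beta> k / w^Suc k)" if w: "norm w = 1" for w
  proof -
    have w0: "w \<noteq> 0" using w by auto
    have E2: "(\<lambda>k. contour_integral (circlepath 0 R2) (\<lambda>u. (g u / u) * (w / u)^k)) sums
             contour_integral (circlepath 0 R2) (\<lambda>u. (g u / u) / (1 - w / u))"
      by (rule contour_geom_series[where q = "1/R2"])
         (use r w in \<open>auto intro!: continuous_intros continuous_on_subset[OF cgR]
                       simp: norm_divide\<close>)
    have t2: "contour_integral (circlepath 0 R2) (\<lambda>u. (g u / u) * (w / u)^k) = (2*pi*\<i>) * (\<alpha> k * w^k)" for k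
    proof -
      have "contour_integral (circlepath 0 R2) (\<lambda>u. (g u / u) * (w / u)^k)
          = contour_integral (circlepath 0 R2) (\<lambda>u. w^k * (g u / u^Suc k))"
        by (rule contour_integral_eq) (simp add: power_divide field_simps)
      also have "\<dots> = w^k * contour_integral (circlepath 0 R2) (\<lambda>u. g u / u^Suc k)"
        by (rule contour_integral_lmul[OF ci1])
      finally show ?thesis unfolding \<alpha>R by simp
    qed
    have e2: "contour_integral (circlepath 0 R2) (\<lambda>u. (g u / u) / (1 - w / u)) =
              contour_integral (circlepath 0 R2) (\<lambda>u. g u / (u - w))"
    proof (rule contour_integral_eq)
      fix u assume "u \<in> path_image (circlepath 0 R2)"
      hence "u \<noteq> 0" "u \<noteq> w" using r w by auto
      thus "(g u / u) / (1 - w / u) = g u / (u - w)" by (simp add: field_simps)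
    qed
    have E1: "(\<lambda>k. contour_integral (circlepath 0 r1) (\<lambda>u. (- g u / w) * (u / w)^k)) sums
             contour_integral (circlepath 0 r1) (\<lambda>u. (- g u / w) / (1 - u / w))"
      by (rule contour_geom_series[where q = "r1"])
         (use r w in \<open>auto intro!: continuous_intros continuous_on_subset[OF cgr]
                       simp: norm_divide\<close>)
    have t1: "contour_integral (circlepath 0 r1) (\<lambda>u. (- g u / w) * (u / w)^k) = - (2*pi*\<i>) * (\<beta> k / w^Suc k)" for k
    proof -
      have "contour_integral (circlepath 0 r1) (\<lambda>u. (- g u / w) * (u / w)^k)
          = contour_integral (circlepath 0 r1) (\<lambda>u. (- 1 / w^Suc k) * (g u * u^k))"
        by (rule contour_integral_eq) (use w0 in \<open>simp add: power_divide field_simps\<close>)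
      also have "\<dots> = (- 1 / w^Suc k) * contour_integral (circlepath 0 r1) (\<lambda>u. g u * u^k)"
        by (rule contour_integral_lmul[OF ci2])
      finally show ?thesis unfolding \<beta>r by simp
    qed
    have e1: "contour_integral (circlepath 0 r1) (\<lambda>u. (- g u / w) / (1 - u / w)) =
              contour_integral (circlepath 0 r1) (\<lambda>u. g u / (u - w))"
    proof (rule contour_integral_eq)
      fix u assume "u \<in> path_image (circlepath 0 r1)"
      hence "u \<noteq> w" using r w by auto
      thus "(- g u / w) / (1 - u / w) = g u / (u - w)" using w0 by (simp add: field_simps)
    qed
    have c: "2*pi*\<i> \<noteq> 0" by simp
    have s2: "(\<lambda>k. \<alpha> k * w^k) sums (contour_integral (circlepath 0 R2) (\<lambda>u. g u / (u - w)) / (2*pi*\<i>))"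
      using sums_divide[OF E2[unfolded t2 e2], of "2*pi*\<i>"] c by simp
    have s1: "(\<lambda>k. \<beta> k / w^Suc k) sums (- contour_integral (circlepath 0 r1) (\<lambda>u. g u / (u - w)) / (2*pi*\<i>))"
      using sums_divide[OF E1[unfolded t1 e1], of "- (2*pi*\<i>)"] c by simp
    have cau: "2*pi*\<i> * g w = contour_integral (circlepath 0 R2) (\<lambda>u. g u/(u-w))
                        - contour_integral (circlepath 0 r1) (\<lambda>u. g u/(u-w))"
      by (rule annulus_cauchy[OF A holA subA]) (use r w in auto)
    have "g w = contour_integral (circlepath 0 R2) (\<lambda>u. g u / (u - w)) / (2*pi*\<i>) +
                (- contour_integral (circlepath 0 r1) (\<lambda>u. g u / (u - w)) / (2*pi*\<i>))"
      using cau c by (simp add: field_simps)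
    thus ?thesis using s1 s2 by (simp add: sums_iff)
  qed
  show ?thesis using that[OF \<rho> M bd\<alpha> bd\<beta> rep] .
qed

lemma int_UNIV_split: "(UNIV::int set) = range int \<union> range (\<lambda>k. - int k - 1)"
proof -
  have "n \<in> range int \<union> range (\<lambda>k. - int k - 1)" for n :: int
  proof (cases "n \<ge> 0")
    case True thus ?thesis by (auto intro!: image_eqI[of _ _ "nat n"])
  next
    case False thus ?thesis by (auto intro!: image_eqI[of _ _ "nat (- n - 1)"])
  qed
  thus ?thesis by auto
qed

lemma int_split_disj: "range int \<inter> range (\<lambda>k. - int k - 1) = {}"
  by auto

lemma inj_neg_int: "inj (\<lambda>k::nat. - int k - 1)"
  by (auto simp: inj_def)

lemma has_sum_int_from_nat:
  fixes f :: "int \<Rightarrow> 'b::banach"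
  assumes "summable (\<lambda>k. norm (f (int k)))" "summable (\<lambda>k. norm (f (- int k - 1)))"
    "(\<lambda>k. f (int k)) sums S1" "(\<lambda>k. f (- int k - 1)) sums S2"
  shows "(f has_sum (S1 + S2)) UNIV"
proof -
  have h1: "(f has_sum S1) (range int)"
    using has_sum_reindex[of int UNIV f S1] norm_summable_imp_has_sum[OF assms(1) assms(3)]
    by (simp add: o_def)
  have h2: "(f has_sum S2) (range (\<lambda>k. - int k - 1))"
    using has_sum_reindex[OF inj_neg_int, of f S2] norm_summable_imp_has_sum[OF assms(2) assms(4)]
    by (simp add: o_def)
  show ?thesis using has_sum_Un_disjoint[OF h1 h2 int_split_disj] int_UNIV_split by simp
qed

lemma has_sum_int_to_nat:
  fixes f :: "int \<Rightarrow> 'b::banach"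
  assumes "(f has_sum S) UNIV"
  obtains S1 S2 where "(\<lambda>k. f (int k)) sums S1" "(\<lambda>k. f (- int k - 1)) sums S2" "S = S1 + S2"
proof -
  have s: "f summable_on UNIV" using assms summable_on_def by blast
  define S1 where "S1 = infsum f (range int)"
  define S2 where "S2 = infsum f (range (\<lambda>k. - int k - 1))"
  have h1: "(f has_sum S1) (range int)" unfolding S1_def
    by (rule has_sum_infsum, rule summable_on_subset_banach[OF s]) auto
  have h2: "(f has_sum S2) (range (\<lambda>k. - int k - 1))" unfolding S2_def
    by (rule has_sum_infsum, rule summable_on_subset_banach[OF s]) auto
  have "(f has_sum (S1 + S2)) UNIV"
    using has_sum_Un_disjoint[OF h1 h2 int_split_disj] int_UNIV_split by simp
  hence "S = S1 + S2" using assms has_sum_unique by blast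
  moreover have "(\<lambda>k. f (int k)) sums S1"
    using has_sum_reindex[of int UNIV f S1] h1 by (auto simp: o_def intro: has_sum_imp_sums)
  moreover have "(\<lambda>k. f (- int k - 1)) sums S2"
    using has_sum_reindex[OF inj_neg_int, of f S2] h2 by (auto simp: o_def intro: has_sum_imp_sums)
  ultimately show ?thesis using that by blast
qed

lemma geom_int_has_sum:
  fixes \<rho> :: real
  assumes "0 \<le> \<rho>" "\<rho> < 1"
  shows "((\<lambda>n::int. \<rho> ^ nat \<bar>n\<bar>) has_sum (1/(1-\<rho>) + \<rho>/(1-\<rho>))) UNIV"
proof (rule has_sum_int_from_nat)
  show "summable (\<lambda>k. norm (\<rho> ^ nat \<bar>int k\<bar>))" using assms by simp
  show "summable (\<lambda>k. norm (\<rho> ^ nat \<bar>- int k - 1\<bar>))"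
  proof -
    have "nat \<bar>- int k - 1\<bar> = Suc k" for k by simp
    thus ?thesis using assms by (simp add: summable_mult)
  qed
  show "(\<lambda>k. \<rho> ^ nat \<bar>int k\<bar>) sums (1/(1-\<rho>))" using assms geometric_sums[of \<rho>] by simp
  have "nat \<bar>- int k - 1\<bar> = Suc k" for k by simp
  hence "(\<lambda>k. \<rho> ^ nat \<bar>- int k - 1\<bar>) = (\<lambda>k. \<rho> * \<rho>^k)" by simp
  thus "(\<lambda>k. \<rho> ^ nat \<bar>- int k - 1\<bar>) sums (\<rho>/(1-\<rho>))"
    using sums_mult[OF geometric_sums[of \<rho>], of \<rho>] assms by simp
qed

lemma uniform_has_sum:
  fixes f :: "'i \<Rightarrow> 'x \<Rightarrow> 'b::banach"
  assumes bd: "\<And>n x. x \<in> X \<Longrightarrow> norm (f n x) \<le> b n" and bs: "b summable_on UNIV"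
    and hs: "\<And>x. x \<in> X \<Longrightarrow> ((\<lambda>n. f n x) has_sum S x) UNIV"
  shows "uniform_limit X (\<lambda>F x. \<Sum>n\<in>F. f n x) S (finite_subsets_at_top UNIV)"
proof (rule uniform_limitI)
  fix e :: real assume e: "e > 0"
  define B where "B = infsum b UNIV"
  have hb: "(b has_sum B) UNIV" using bs B_def by simp
  hence "(sum b \<longlongrightarrow> B) (finite_subsets_at_top UNIV)" by (simp add: has_sum_def)
  hence ev: "\<forall>\<^sub>F F in finite_subsets_at_top UNIV. dist (sum b F) B < e"
    using e tendstoD by blast
  show "\<forall>\<^sub>F F in finite_subsets_at_top UNIV. \<forall>x\<in>X. dist (\<Sum>n\<in>F. f n x) (S x) < e"
  proof (rule eventually_mp[OF _ ev], rule eventually_finite_subsets_at_top_weakI, intro impI ballI)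
    fix F :: "'i set" and x assume F: "finite F" and d: "dist (sum b F) B < e" and x: "x \<in> X"
    have t1: "((\<lambda>n. f n x) has_sum (S x - (\<Sum>n\<in>F. f n x))) (UNIV - F)"
      by (rule has_sum_Diff[OF hs[OF x] has_sum_finite[OF F]]) auto
    have t2: "(b has_sum (B - sum b F)) (UNIV - F)"
      by (rule has_sum_Diff[OF hb has_sum_finite[OF F]]) auto
    have "norm (S x - (\<Sum>n\<in>F. f n x)) \<le> B - sum b F"
    proof -
      have nb: "(\<lambda>n. norm (f n x)) summable_on (UNIV - F)"
        by (rule summable_on_comparison_test[of b]) (use t2 bd x in \<open>auto simp: summable_on_def\<close>)
      have "norm (S x - (\<Sum>n\<in>F. f n x)) \<le> infsum (\<lambda>n. norm (f n x)) (UNIV - F)"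
        by (rule norm_has_sum_bound[OF has_sum_infsum[OF nb] t1])
      also have "\<dots> \<le> B - sum b F"
        by (rule has_sum_mono[OF has_sum_infsum[OF nb] t2]) (use bd x in auto)
      finally show ?thesis .
    qed
    also have "\<dots> < e" using d by (simp add: dist_real_def)
    finally show "dist (\<Sum>n\<in>F. f n x) (S x) < e" by (simp add: dist_norm norm_minus_commute)
  qed
qed

lemma circle_integral_cis:
  assumes "f contour_integrable_on circlepath 0 1"
  shows "((\<lambda>t. f (cis t) * cis t) has_integral (contour_integral (circlepath 0 1) f / \<i>)) {0..2*pi}"
proof -
  have "(f has_contour_integral contour_integral (circlepath 0 1) f) (part_circlepath 0 1 0 (2*pi))"
    using has_contour_integral_integral[OF assms] by (simp add: circlepath_def)
  hence "((\<lambda>t. f (0 + 1 * cis t) * 1 * \<i> * cis t) has_integral contour_integral (circlepath 0 1) f) {0..2*pi}"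
    by (subst (asm) has_contour_integral_part_circlepath_iff) auto
  hence "((\<lambda>t. f (0 + 1 * cis t) * 1 * \<i> * cis t * (- \<i>)) has_integral contour_integral (circlepath 0 1) f * (- \<i>)) {0..2*pi}"
    by (rule has_integral_mult_left)
  moreover have "f (0 + 1 * cis t) * 1 * \<i> * cis t * (- \<i>) = f (cis t) * cis t" for t
    by (simp add: algebra_simps)
  ultimately show ?thesis by (simp add: divide_inverse)
qed

lemma cis_pow_div: "cis t / cis t ^ Suc k = cis (- (of_int (int k) * t))"
  by (subst Complex.DeMoivre, subst cis_divide) (simp add: algebra_simps)

lemma cis_pow_mul: "cis t ^ k * cis t = cis (- (of_int (- int k - 1) * t))"
  by (subst Complex.DeMoivre, subst cis_mult) (simp add: algebra_simps)

lemma fourier_rep: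
  assumes "analytic_on_circle v"
  obtains \<rho> M where "0 < \<rho>" "\<rho> < 1" "0 \<le> M"
    "\<And>n. norm (fourier_coeff v n) \<le> M * \<rho> ^ nat \<bar>n\<bar>"
    "\<And>\<theta>. ((\<lambda>n. fourier_coeff v n * cis (of_int n * \<theta>)) has_sum complex_of_real (v (cis \<theta>))) UNIV"
    "continuous_on UNIV (\<lambda>\<theta>. complex_of_real (v (cis \<theta>)))"
proof -
  obtain S g where S: "open S" "sphere 0 1 \<subseteq> S" and hol: "g holomorphic_on S"
    and gv: "\<And>w. w \<in> sphere 0 1 \<Longrightarrow> g w = complex_of_real (v w)"
    using assms unfolding analytic_on_circle_def by blast
  define \<alpha> where "\<alpha> \<equiv> \<lambda>k::nat. contour_integral (circlepath 0 1) (\<lambda>u. g u / u^Suc k) / (2*pi*\<i>)"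
  define \<beta> where "\<beta> \<equiv> \<lambda>k::nat. contour_integral (circlepath 0 1) (\<lambda>u. g u * u^k) / (2*pi*\<i>)"
  obtain \<rho> M where \<rho>: "0 < \<rho>" "\<rho> < 1" and M: "0 \<le> M" and b\<alpha>: "\<And>k. norm (\<alpha> k) \<le> M * \<rho>^k"
    and b\<beta>: "\<And>k. norm (\<beta> k) \<le> M * \<rho>^Suc k"
    and rep: "\<And>w. norm w = 1 \<Longrightarrow> (\<lambda>k. \<alpha> k * w^k) sums (\<Sum>k. \<alpha> k * w^k) \<and>
          (\<lambda>k. \<beta> k / w^Suc k) sums (\<Sum>k. \<beta> k / w^Suc k) \<and>
          g w = (\<Sum>k. \<alpha> k * w^k) + (\<Sum>k. \<beta> k / w^Suc k)"
    using laurent_circle[OF S hol] unfolding \<alpha>_def \<beta>_def by blast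
  have gc: "g (cis t) = complex_of_real (v (cis t))" for t by (rule gv) simp
  have cg: "continuous_on S g" using hol holomorphic_on_imp_continuous_on by blast
  have cont: "continuous_on UNIV (\<lambda>\<theta>. complex_of_real (v (cis \<theta>)))"
  proof -
    have "continuous_on UNIV (\<lambda>\<theta>. g (cis \<theta>))"
      by (rule continuous_on_compose2[OF cg continuous_on_cis[OF continuous_on_id]]) (use S in auto)
    thus ?thesis by (simp add: gc)
  qed
  have cg1: "continuous_on (sphere 0 1) g" using cg S continuous_on_subset by blast
  have fc: "integral {0..2*pi} (\<lambda>\<theta>. complex_of_real (v (cis \<theta>)) * cis (- (of_int n * \<theta>))) / complex_of_real (2*pi)
             = fourier_coeff v n" for n by (simp add: fourier_coeff_def)
  have a\<alpha>: "fourier_coeff v (int k) = \<alpha> k" for k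
  proof -
    have ci: "(\<lambda>u. g u / u^Suc k) contour_integrable_on circlepath 0 1"
      by (intro contour_integrable_continuous_circlepath continuous_intros
          continuous_on_subset[OF cg1]) auto
    have "((\<lambda>t. g (cis t) / cis t ^ Suc k * cis t) has_integral
            (contour_integral (circlepath 0 1) (\<lambda>u. g u / u^Suc k) / \<i>)) {0..2*pi}"
      using circle_integral_cis[OF ci] by simp
    moreover have "g (cis t) / cis t ^ Suc k * cis t = complex_of_real (v (cis t)) * cis (- (of_int (int k) * t))" for t
    proof -
      have "g (cis t) / cis t ^ Suc k * cis t = g (cis t) * (cis t / cis t ^ Suc k)"
        by (simp add: divide_inverse mult_ac)
      thus ?thesis by (simp only: cis_pow_div gc)
    qed
    ultimately have "integral {0..2*pi} (\<lambda>\<theta>. complex_of_real (v (cis \<theta>)) * cis (- (of_int (int k) * \<theta>)))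
          = contour_integral (circlepath 0 1) (\<lambda>u. g u / u^Suc k) / \<i>"
      by (simp add: integral_unique)
    thus ?thesis unfolding fc[symmetric] \<alpha>_def by (simp add: field_simps)
  qed
  have a\<beta>: "fourier_coeff v (- int k - 1) = \<beta> k" for k
  proof -
    have ci: "(\<lambda>u. g u * u^k) contour_integrable_on circlepath 0 1"
      by (intro contour_integrable_continuous_circlepath continuous_intros
          continuous_on_subset[OF cg1]) auto
    have "((\<lambda>t. g (cis t) * cis t ^ k * cis t) has_integral
            (contour_integral (circlepath 0 1) (\<lambda>u. g u * u^k) / \<i>)) {0..2*pi}"
      using circle_integral_cis[OF ci] by simp
    moreover have "g (cis t) * cis t ^ k * cis t = complex_of_real (v (cis t)) * cis (- (of_int (- int k - 1) * t))" for t
      by (simp only: cis_pow_mul gc mult.assoc)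
    ultimately have "integral {0..2*pi} (\<lambda>\<theta>. complex_of_real (v (cis \<theta>)) * cis (- (of_int (- int k - 1) * \<theta>)))
          = contour_integral (circlepath 0 1) (\<lambda>u. g u * u^k) / \<i>"
      by (simp add: integral_unique)
    thus ?thesis unfolding fc[symmetric] \<beta>_def by (simp add: field_simps)
  qed
  have bd: "norm (fourier_coeff v n) \<le> M * \<rho> ^ nat \<bar>n\<bar>" for n
  proof (cases "n \<ge> 0")
    case True
    then obtain k where "n = int k" by (metis nonneg_eq_int)
    thus ?thesis using b\<alpha>[of k] a\<alpha>[of k] by simp
  next
    case False
    define k where "k = nat (- n - 1)"
    have k: "n = - int k - 1" using False by (simp add: k_def)
    have "nat \<bar>n\<bar> = Suc k" using k by simp
    thus ?thesis using b\<beta>[of k] a\<beta>[of k] k by simp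
  qed
  have hs: "((\<lambda>n. fourier_coeff v n * cis (of_int n * \<theta>)) has_sum complex_of_real (v (cis \<theta>))) UNIV" for \<theta>
  proof -
    define w where "w = cis \<theta>"
    have w: "norm w = 1" by (simp add: w_def)
    note R = rep[OF w]
    have e1: "fourier_coeff v (int k) * cis (of_int (int k) * \<theta>) = \<alpha> k * w^k" for k
      by (simp add: a\<alpha> w_def Complex.DeMoivre)
    have e2: "fourier_coeff v (- int k - 1) * cis (of_int (- int k - 1) * \<theta>) = \<beta> k / w^Suc k" for k
    proof -
      have "of_int (- int k - 1) * \<theta> = - (real (Suc k) * \<theta>)" by (simp add: algebra_simps)
      hence "cis (of_int (- int k - 1) * \<theta>) = inverse (cis (real (Suc k) * \<theta>))" by simp
      also have "\<dots> = inverse (cis \<theta> ^ Suc k)" by (simp only: Complex.DeMoivre)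
      finally have "cis (of_int (- int k - 1) * \<theta>) = inverse (cis \<theta> ^ Suc k)" .
      thus ?thesis by (simp add: a\<beta> w_def divide_inverse)
    qed
    have "((\<lambda>n. fourier_coeff v n * cis (of_int n * \<theta>)) has_sum
          ((\<Sum>k. \<alpha> k * w^k) + (\<Sum>k. \<beta> k / w^Suc k))) UNIV"
    proof (rule has_sum_int_from_nat)
      show "summable (\<lambda>k. norm (fourier_coeff v (int k) * cis (of_int (int k) * \<theta>)))"
      proof (rule summable_comparison_test'[of "\<lambda>k. M * \<rho>^k" 0])
        show "summable (\<lambda>k. M * \<rho>^k)" using \<rho> by (intro summable_mult summable_geometric) auto
        fix k :: nat
        show "norm (norm (fourier_coeff v (int k) * cis (of_int (int k) * \<theta>))) \<le> M * \<rho>^k"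
          using bd[of "int k"] by (simp add: norm_mult)
      qed
      show "summable (\<lambda>k. norm (fourier_coeff v (- int k - 1) * cis (of_int (- int k - 1) * \<theta>)))"
      proof (rule summable_comparison_test'[of "\<lambda>k. M * \<rho>^Suc k" 0])
        show "summable (\<lambda>k. M * \<rho>^Suc k)" using \<rho> 
          by (simp only: power_Suc mult.assoc[symmetric]) (intro summable_mult summable_geometric, auto)
        fix k :: nat
        have "nat \<bar>- int k - 1\<bar> = Suc k" by simp
        thus "norm (norm (fourier_coeff v (- int k - 1) * cis (of_int (- int k - 1) * \<theta>))) \<le> M * \<rho>^Suc k"
          using bd[of "- int k - 1"] by (simp add: norm_mult del: power_Suc)
      qed
    qed (use R e1 e2 in simp_all)
    moreover have "g w = complex_of_real (v (cis \<theta>))" by (simp add: w_def gc)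
    ultimately show ?thesis using R by simp
  qed
  show ?thesis using that[OF \<rho> M bd hs cont] .
qed

definition fc :: "(real \<Rightarrow> complex) \<Rightarrow> nat \<Rightarrow> int \<Rightarrow> complex" where
  "fc V l d = integral {0..2*pi} (\<lambda>\<theta>. V \<theta> ^ l * cis (- (of_int d * \<theta>))) / complex_of_real (2*pi)"

lemma i_mult_i_aux: "\<i> * (x * \<i>) = - (x::complex)" by (metis complex_i_mult_minus mult.commute)

lemma integral_cis_int:
  "integral {0..2*pi} (\<lambda>\<theta>. cis (- (of_int d * \<theta>))) = (if d = 0 then complex_of_real (2*pi) else 0)"
proof (cases "d = 0")
  case True thus ?thesis by (simp add: scaleR_conv_of_real)
next
  case False
  define F where "F = (\<lambda>z::complex. \<i> / of_int d * exp (\<i> * (- (of_int d * z))))"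
  have der: "((\<lambda>\<theta>. F (of_real \<theta>)) has_vector_derivative cis (- (of_int d * \<theta>))) (at \<theta> within {0..2*pi})" for \<theta>
  proof (rule has_vector_derivative_real_field)
    have "(F has_field_derivative (\<i> / of_int d * (exp (\<i> * (- (of_int d * of_real \<theta>))) * (\<i> * (- of_int d)))))
          (at (of_real \<theta>))"
      unfolding F_def by (rule derivative_eq_intros refl)+ (simp add: algebra_simps)
    moreover have "\<i> / of_int d * (exp (\<i> * (- (of_int d * of_real \<theta>))) * (\<i> * (- of_int d))) = cis (- (of_int d * \<theta>))"
    proof -
      define E where "E = exp (\<i> * (- (of_int d * of_real \<theta>)))"
      have "\<i> / of_int d * (E * (\<i> * (- of_int d))) = - (\<i> * (E * \<i>)) * (of_int d / of_int d)"
        by (simp add: algebra_simps)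
      also have "\<dots> = E" using False by (simp only: i_mult_i_aux) simp
      also have "E = cis (- (of_int d * \<theta>))" by (simp add: E_def cis_conv_exp)
      finally show ?thesis by (simp add: E_def)
    qed
    ultimately show "(F has_field_derivative cis (- (of_int d * \<theta>))) (at (of_real \<theta>))" by simp
  qed
  have "((\<lambda>\<theta>. cis (- (of_int d * \<theta>))) has_integral (F (of_real (2*pi)) - F (of_real 0))) {0..2*pi}"
    by (rule fundamental_theorem_of_calculus) (use der in auto)
  moreover have "F (of_real (2*pi)) = F (of_real 0)"
  proof -
    have "exp (\<i> * (- (of_int d * of_real (2*pi)))) = cis (2 * pi * of_int (- d))"
      by (simp add: cis_conv_exp algebra_simps)
    also have "\<dots> = 1" by (rule cis_multiple_2pi) simp
    finally show ?thesis by (simp add: F_def)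
  qed
  ultimately show ?thesis using False by (simp add: integral_unique)
qed

lemma fc0: "fc V 0 d = (if d = 0 then 1 else 0)"
  by (simp add: fc_def integral_cis_int)

lemma fc_bound:
  assumes contV: "continuous_on UNIV V" and Vb: "\<And>\<theta>. \<theta> \<in> {0..2*pi} \<Longrightarrow> norm (V \<theta>) \<le> Vb"
  shows "norm (fc V l d) \<le> Vb ^ l"
proof -
  have h0: "0 \<le> Vb ^ l" using Vb[of 0] by (simp add: order_trans[OF norm_ge_zero])
  have hi: "((\<lambda>\<theta>. V \<theta> ^ l * cis (- (of_int d * \<theta>))) has_integral integral {0..2*pi} (\<lambda>\<theta>. V \<theta> ^ l * cis (- (of_int d * \<theta>)))) (cbox 0 (2*pi))"
      by (simp, rule integrable_integral, rule integrable_continuous_interval)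
         (intro continuous_intros continuous_on_subset[OF contV]; simp)
  have hb: "norm (V x ^ l * cis (- (of_int d * x))) \<le> Vb ^ l" if "x \<in> cbox 0 (2*pi)" for x
      using Vb that by (simp add: norm_mult norm_power power_mono)
  have "norm (integral {0..2*pi} (\<lambda>\<theta>. V \<theta> ^ l * cis (- (of_int d * \<theta>)))) \<le> Vb ^ l * (2*pi)"
    using has_integral_bound[OF h0 hi hb] by simp
  thus ?thesis using pi_gt_zero by (simp add: fc_def norm_divide pos_divide_le_eq)
qed

lemma fc_has_integral:
  assumes contV: "continuous_on UNIV V"
  shows "((\<lambda>\<theta>. V \<theta> ^ l * cis (- (of_int d * \<theta>))) has_integral (complex_of_real (2*pi) * fc V l d)) {0..2*pi}"
proof -
  have "complex_of_real (2*pi) * fc V l d = integral {0..2*pi} (\<lambda>\<theta>. V \<theta> ^ l * cis (- (of_int d * \<theta>)))"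
    by (simp add: fc_def field_simps)
  moreover have "(\<lambda>\<theta>. V \<theta> ^ l * cis (- (of_int d * \<theta>))) integrable_on {0..2*pi}"
    by (rule integrable_continuous_interval)
       (intro continuous_intros continuous_on_subset[OF contV]; simp)
  ultimately show ?thesis by (simp add: integrable_integral)
qed

lemma fc_rec:
  fixes V :: "real \<Rightarrow> complex" and a :: "int \<Rightarrow> complex"
  assumes contV: "continuous_on UNIV V" and Vb: "\<And>\<theta>. \<theta> \<in> {0..2*pi} \<Longrightarrow> norm (V \<theta>) \<le> Vb"
    and \<rho>: "0 \<le> \<rho>" "\<rho> < 1" and M: "0 \<le> M" and abd: "\<And>n. norm (a n) \<le> M * \<rho>^nat \<bar>n\<bar>"
    and rep: "\<And>\<theta>. ((\<lambda>n. a n * cis (of_int n * \<theta>)) has_sum V \<theta>) UNIV"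
  shows "((\<lambda>n. fc V l (d - n) * a n) has_sum fc V (Suc l) d) UNIV"
proof -
  define P where "P = complex_of_real (2*pi)"
  have P: "P \<noteq> 0" by (simp add: P_def)
  define t where "t = (\<lambda>n \<theta>. a n * (V \<theta> ^ l * cis (- (of_int (d - n) * \<theta>))))"
  define G where "G = (\<lambda>\<theta>. V \<theta> ^ Suc l * cis (- (of_int d * \<theta>)))"
  have Vb0: "0 \<le> Vb" using Vb[of 0] by (simp add: order_trans[OF norm_ge_zero])
  have pw: "((\<lambda>n. t n \<theta>) has_sum G \<theta>) UNIV" for \<theta>
  proof -
    have "((\<lambda>n. (V \<theta> ^ l * cis (- (of_int d * \<theta>))) * (a n * cis (of_int n * \<theta>))) has_sum
          (V \<theta> ^ l * cis (- (of_int d * \<theta>))) * V \<theta>) UNIV"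
      by (rule has_sum_cmult_right[OF rep])
    moreover have "(V \<theta> ^ l * cis (- (of_int d * \<theta>))) * (a n * cis (of_int n * \<theta>)) = t n \<theta>" for n
    proof -
      have "cis (- (of_int d * \<theta>)) * cis (of_int n * \<theta>) = cis (- (of_int (d - n) * \<theta>))"
        by (simp add: cis_mult algebra_simps)
      thus ?thesis unfolding t_def by (metis (no_types, lifting) mult.assoc mult.left_commute)
    qed
    moreover have "(V \<theta> ^ l * cis (- (of_int d * \<theta>))) * V \<theta> = G \<theta>"
      by (simp add: G_def mult_ac)
    ultimately show ?thesis by simp
  qed
  have bsum: "(\<lambda>n. M * Vb ^ l * \<rho>^nat \<bar>n\<bar>) summable_on UNIV"
    using summable_on_cmult_right[OF has_sum_imp_summable[OF geom_int_has_sum[OF \<rho>]], of "M * Vb ^ l"]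
    by simp
  have tb: "norm (t n \<theta>) \<le> M * Vb ^ l * \<rho>^nat \<bar>n\<bar>" if "\<theta> \<in> {0..2*pi}" for n \<theta>
  proof -
    have "norm (t n \<theta>) = norm (a n) * norm (V \<theta>) ^ l" by (simp add: t_def norm_mult norm_power)
    also have "\<dots> \<le> (M * \<rho>^nat \<bar>n\<bar>) * Vb ^ l"
      by (intro mult_mono abd power_mono Vb that) (use Vb0 M \<rho> in auto)
    finally show ?thesis by (simp add: mult_ac)
  qed
  have ul: "uniform_limit {0..2*pi} (\<lambda>F \<theta>. \<Sum>n\<in>F. t n \<theta>) G (finite_subsets_at_top UNIV)"
    by (rule uniform_has_sum[OF tb bsum pw])
  have ct: "continuous_on {0..2*pi} (t n)" for n
    unfolding t_def by (intro continuous_intros continuous_on_subset[OF contV]) auto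
  obtain I J where I: "\<And>F. ((\<lambda>\<theta>. \<Sum>n\<in>F. t n \<theta>) has_integral I F) {0..2*pi}"
    and J: "(G has_integral J) {0..2*pi}" and IJ: "(I \<longlongrightarrow> J) (finite_subsets_at_top UNIV)"
    by (rule uniform_limit_integral[OF ul]) (auto intro!: continuous_intros ct)
  have tint: "(t n has_integral (a n * (P * fc V l (d - n)))) {0..2*pi}" for n
  proof -
    have "((\<lambda>\<theta>. V \<theta> ^ l * cis (- (of_int (d - n) * \<theta>))) has_integral P * fc V l (d - n)) {0..2*pi}"
      unfolding P_def by (rule fc_has_integral[OF contV])
    thus ?thesis unfolding t_def by (rule has_integral_mult_right)
  qed
  have IF: "I F = (\<Sum>n\<in>F. P * (fc V l (d - n) * a n))" if "finite F" for F
  proof -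
    have "((\<lambda>\<theta>. \<Sum>n\<in>F. t n \<theta>) has_integral (\<Sum>n\<in>F. a n * (P * fc V l (d - n)))) {0..2*pi}"
      by (rule has_integral_sum[OF that tint])
    hence "I F = (\<Sum>n\<in>F. a n * (P * fc V l (d - n)))" using I has_integral_unique by blast
    thus ?thesis by (simp add: mult_ac)
  qed
  have JG: "J = P * fc V (Suc l) d"
  proof -
    have "(G has_integral P * fc V (Suc l) d) {0..2*pi}"
      unfolding P_def G_def by (rule fc_has_integral[OF contV])
    thus ?thesis using J has_integral_unique by blast
  qed
  have "((\<lambda>F. \<Sum>n\<in>F. P * (fc V l (d - n) * a n)) \<longlongrightarrow> P * fc V (Suc l) d) (finite_subsets_at_top UNIV)"
    using IJ unfolding JG
    by (rule Lim_transform_eventually) (auto intro!: eventually_finite_subsets_at_top_weakI simp: IF)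
  hence "((\<lambda>n. P * (fc V l (d - n) * a n)) has_sum P * fc V (Suc l) d) UNIV"
    by (simp add: has_sum_def)
  hence "((\<lambda>n. inverse P * (P * (fc V l (d - n) * a n))) has_sum inverse P * (P * fc V (Suc l) d)) UNIV"
    by (rule has_sum_cmult_right)
  moreover have "inverse P * (P * x) = x" for x using P by (simp add: mult.assoc[symmetric])
  ultimately show ?thesis by simp
qed

lemma sums_norm_le:
  fixes f :: "nat \<Rightarrow> 'a::banach"
  assumes "f sums A" "g sums B" "\<And>i. norm (f i) \<le> g i"
  shows "norm A \<le> B"
proof -
  have sg: "summable g" using assms(2) sums_summable by blast
  have sn: "summable (\<lambda>i. norm (f i))"
    by (rule summable_comparison_test'[OF sg]) (use assms(3) in auto)
  have "norm A = norm (suminf f)" using assms(1) sums_unique by metis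
  also have "\<dots> \<le> (\<Sum>i. norm (f i))" by (rule summable_norm[OF sn])
  also have "\<dots> \<le> suminf g" by (rule suminf_le[OF assms(3) sn sg])
  also have "\<dots> = B" using assms(2) sums_unique by metis
  finally show ?thesis .
qed

lemma suminf_shift0:
  fixes f :: "nat \<Rightarrow> 'a::real_normed_vector"
  assumes "f 0 = 0"
  shows "suminf (\<lambda>n. f (Suc n)) = suminf f"
proof -
  have "(\<lambda>s. (\<lambda>n. f (Suc n)) sums s) = (\<lambda>s. f sums s)"
    using sums_Suc_iff[of f] assms by auto
  thus ?thesis unfolding suminf_def by simp
qed

lemma geom_shift_sums:
  fixes \<rho> :: real
  assumes \<rho>: "0 \<le> \<rho>" "\<rho> < 1"
  obtains s where "(\<lambda>m::nat. \<rho> ^ nat \<bar>int m - int k\<bar>) sums s" "0 \<le> s" "s \<le> 1/(1-\<rho>) + \<rho>/(1-\<rho>)"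
proof -
  define g where "g = (\<lambda>n::int. \<rho> ^ nat \<bar>n\<bar>)"
  define S0 where "S0 = 1/(1-\<rho>) + \<rho>/(1-\<rho>)"
  have hg: "(g has_sum S0) UNIV" unfolding g_def S0_def by (rule geom_int_has_sum[OF \<rho>])
  define h where "h = (\<lambda>m::nat. int m - int k)"
  have inj: "inj h" by (auto simp: h_def inj_def)
  have sm: "g summable_on range h"
    by (rule summable_on_subset_banach[OF has_sum_imp_summable[OF hg]]) auto
  define s where "s = infsum g (range h)"
  have hs: "(g has_sum s) (range h)" unfolding s_def by (rule has_sum_infsum[OF sm])
  hence "((g \<circ> h) has_sum s) UNIV" using has_sum_reindex[OF inj] by blast
  hence "(g \<circ> h) sums s" by (rule has_sum_imp_sums)
  hence 1: "(\<lambda>m::nat. \<rho> ^ nat \<bar>int m - int k\<bar>) sums s" by (simp add: g_def h_def o_def)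
  have 2: "0 \<le> s" by (rule has_sum_nonneg[OF hs]) (use \<rho> in \<open>auto simp: g_def\<close>)
  have 3: "s \<le> S0"
    by (rule has_sum_mono_neutral[OF hs hg]) (use \<rho> in \<open>auto simp: g_def\<close>)
  show ?thesis using that[OF 1 2] 3 by (simp add: S0_def)
qed

lemma imat_mult_id_left: "imat_mult imat_id B j k = B j k"
proof -
  have "(\<lambda>m. imat_id j m * B m k) = (\<lambda>m. if m = j then B j k else 0)"
    by (auto simp: imat_id_def)
  thus ?thesis unfolding imat_mult_def using sums_single[of j "\<lambda>_. B j k"] sums_unique by fastforce
qed

lemma pow_ineq:
  fixes r :: real assumes "0 \<le> r" "r \<le> 1"
  shows "r ^ i * (r^2) ^ nat \<bar>int i - int k\<bar> \<le> r ^ k * r ^ nat \<bar>int i - int k\<bar>"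
proof -
  define d where "d = nat \<bar>int i - int k\<bar>"
  have "r ^ i * (r^2) ^ d = r ^ (i + 2*d)" by (simp add: power_add power_mult)
  also have "\<dots> \<le> r ^ (k + d)" by (rule power_decreasing) (use assms in \<open>auto simp: d_def\<close>)
  also have "\<dots> = r ^ k * r ^ d" by (simp add: power_add)
  finally show ?thesis by (simp add: d_def)
qed

context
  fixes a :: "int \<Rightarrow> complex" and c :: "nat \<Rightarrow> int \<Rightarrow> complex" and r M Cb :: real
  assumes r: "0 < r" "r < 1" and M: "0 \<le> M" and Cb: "0 \<le> Cb"
    and abd: "\<And>n. norm (a n) \<le> M * (r^2) ^ nat \<bar>n\<bar>"
    and cbd: "\<And>l d. norm (c l d) \<le> Cb ^ l"
    and c0: "\<And>d. c 0 d = (if d = 0 then 1 else 0)"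
    and crec: "\<And>l d. ((\<lambda>n. c l (d - n) * a n) has_sum c (Suc l) d) UNIV"
begin

lemma err_bound:
  "\<exists>E\<ge>0. \<forall>j k. norm (imat_pow (\<lambda>j k. a (int j - int k)) l j k - c l (int j - int k)) \<le> E * r^k"
proof (induction l)
  case 0
  have "imat_id j k - c 0 (int j - int k) = 0" for j k by (simp add: imat_id_def c0)
  thus ?case by (intro exI[of _ 0]) simp
next
  case (Suc l)
  define T where "T = (\<lambda>j k. a (int j - int k))"
  define P where "P = imat_pow T l"
  obtain E where E: "0 \<le> E" "\<And>j k. norm (P j k - c l (int j - int k)) \<le> E * r^k"
    using Suc.IH unfolding P_def T_def by blast
  define \<rho> where "\<rho> = r^2"
  have \<rho>: "0 \<le> \<rho>" "\<rho> < 1" using r by (auto simp: \<rho>_def power_less_one_iff abs_square_less_1)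
  define S0r where "S0r = 1/(1-r) + r/(1-r)"
  define E' where "E' = E * M * S0r + Cb^l * M / (1 - \<rho>)"
  have S0r: "0 \<le> S0r" using r by (simp add: S0r_def)
  have E': "0 \<le> E'" using E M Cb S0r \<rho> by (simp add: E'_def)
  have main: "norm (imat_pow T (Suc l) j k - c (Suc l) (int j - int k)) \<le> E' * r^k" for j k
  proof -
    have Pbd: "norm (P j m) \<le> Cb^l + E" for m
    proof -
      have "norm (P j m) \<le> norm (c l (int j - int m)) + norm (P j m - c l (int j - int m))"
        by (metis add.commute diff_add_cancel norm_triangle_ineq)
      also have "\<dots> \<le> Cb^l + E * r^m" by (intro add_mono cbd E)
      also have "E * r^m \<le> E" using E r by (simp add: mult_left_le power_le_one)
      finally show ?thesis by simp
    qed
    obtain s\<rho> where s\<rho>: "(\<lambda>m::nat. \<rho> ^ nat \<bar>int m - int k\<bar>) sums s\<rho>"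
      "0 \<le> s\<rho>" "s\<rho> \<le> 1/(1-\<rho>) + \<rho>/(1-\<rho>)"
      by (rule geom_shift_sums[OF \<rho>, of k])
    have r01: "0 \<le> r" "r < 1" using r by auto
    obtain sr where sr: "(\<lambda>m::nat. r ^ nat \<bar>int m - int k\<bar>) sums sr" "0 \<le> sr" "sr \<le> S0r"
      unfolding S0r_def by (rule geom_shift_sums[OF r01, of k])
    define f1 where "f1 = (\<lambda>m. P j m * a (int m - int k))"
    have sf1: "summable f1"
    proof (rule summable_comparison_test'[of "\<lambda>m. (Cb^l + E) * M * \<rho> ^ nat \<bar>int m - int k\<bar>" 0])
      show "summable (\<lambda>m. (Cb^l + E) * M * \<rho> ^ nat \<bar>int m - int k\<bar>)"
        using sums_summable[OF s\<rho>(1)] by (rule summable_mult)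
      fix m :: nat
      have "norm (f1 m) = norm (P j m) * norm (a (int m - int k))" by (simp add: f1_def norm_mult)
      also have "\<dots> \<le> (Cb^l + E) * (M * \<rho> ^ nat \<bar>int m - int k\<bar>)"
        by (intro mult_mono Pbd abd[unfolded \<rho>_def[symmetric]]) (use Cb E in auto)
      finally show "norm (f1 m) \<le> (Cb^l + E) * M * \<rho> ^ nat \<bar>int m - int k\<bar>" by (simp add: mult_ac)
    qed
    have P1: "f1 sums imat_pow T (Suc l) j k"
      using sf1 by (simp add: P_def f1_def imat_mult_def summable_sums T_def)
    have hs: "((\<lambda>m::int. c l (int j - m) * a (m - int k)) has_sum c (Suc l) (int j - int k)) UNIV"
    proof -
      have "((\<lambda>n. c l ((int j - int k) - n) * a n) has_sum c (Suc l) (int j - int k)) UNIV"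
        by (rule crec)
      moreover have "((\<lambda>n. c l ((int j - int k) - n) * a n) has_sum c (Suc l) (int j - int k)) UNIV =
            ((\<lambda>m::int. c l (int j - m) * a (m - int k)) has_sum c (Suc l) (int j - int k)) UNIV"
        by (rule has_sum_reindex_bij_witness[where i = "\<lambda>m. m - int k" and j = "\<lambda>n. n + int k"]) (auto simp: algebra_simps)
      ultimately show ?thesis by simp
    qed
    obtain S1 S2 where S1: "(\<lambda>i. c l (int j - int i) * a (int i - int k)) sums S1"
      and S2: "(\<lambda>i. c l (int j - (- int i - 1)) * a ((- int i - 1) - int k)) sums S2"
      and S12: "c (Suc l) (int j - int k) = S1 + S2"
      using has_sum_int_to_nat[OF hs] by blast
    have D: "(\<lambda>i. (P j i - c l (int j - int i)) * a (int i - int k)) sums (imat_pow T (Suc l) j k - S1)"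
      using sums_diff[OF P1 S1] by (simp add: f1_def algebra_simps)
    have b1: "norm (imat_pow T (Suc l) j k - S1) \<le> E * M * r^k * sr"
    proof (rule sums_norm_le[OF D sums_mult[OF sr(1), of "E * M * r^k"]])
      fix i
      have "norm ((P j i - c l (int j - int i)) * a (int i - int k)) \<le> (E * r^i) * (M * \<rho> ^ nat \<bar>int i - int k\<bar>)"
        unfolding norm_mult by (intro mult_mono E abd[unfolded \<rho>_def[symmetric]]) (use E r in auto)
      also have "\<dots> = E * M * (r^i * (r^2) ^ nat \<bar>int i - int k\<bar>)" by (simp add: \<rho>_def mult_ac)
      also have "\<dots> \<le> E * M * (r^k * r ^ nat \<bar>int i - int k\<bar>)"
        by (intro mult_left_mono pow_ineq) (use r E M in auto)
      finally show "norm ((P j i - c l (int j - int i)) * a (int i - int k)) \<le> E * M * r^k * r ^ nat \<bar>int i - int k\<bar>"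
        by (simp add: mult_ac)
    qed
    have g2: "(\<lambda>i. Cb^l * M * \<rho>^Suc k * \<rho>^i) sums (Cb^l * M * \<rho>^Suc k * (1 / (1 - \<rho>)))"
      by (rule sums_mult[OF geometric_sums]) (use \<rho> in auto)
    have b2: "norm S2 \<le> Cb^l * M * \<rho>^Suc k * (1 / (1 - \<rho>))"
    proof (rule sums_norm_le[OF S2 g2])
      fix i
      have "nat \<bar>(- int i - 1) - int k\<bar> = Suc k + i" by simp
      hence "norm (a ((- int i - 1) - int k)) \<le> M * \<rho>^(Suc k + i)"
        using abd[of "(- int i - 1) - int k"] by (simp add: \<rho>_def)
      hence "norm (c l (int j - (- int i - 1)) * a ((- int i - 1) - int k)) \<le> Cb^l * (M * \<rho>^(Suc k + i))"
        unfolding norm_mult by (intro mult_mono cbd) (use Cb in auto)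
      thus "norm (c l (int j - (- int i - 1)) * a ((- int i - 1) - int k)) \<le> Cb^l * M * \<rho>^Suc k * \<rho>^i"
        by (simp add: power_add mult_ac)
    qed
    have "\<rho>^Suc k \<le> r^k"
    proof -
      have "\<rho>^Suc k \<le> \<rho>^k" using \<rho> by (intro power_decreasing) auto
      also have "\<rho>^k = r^k * r^k" by (simp add: \<rho>_def power_mult_distrib[symmetric] power2_eq_square)
      also have "\<dots> \<le> r^k * 1" using r by (intro mult_left_mono power_le_one) auto
      finally show ?thesis by simp
    qed
    hence "Cb^l * M * \<rho>^Suc k * (1 / (1 - \<rho>)) \<le> Cb^l * M * r^k * (1 / (1 - \<rho>))"
      using \<rho> Cb M by (intro mult_right_mono mult_left_mono) auto
    hence b2': "norm S2 \<le> Cb^l * M / (1 - \<rho>) * r^k"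
      using b2 by simp
    have b1': "norm (imat_pow T (Suc l) j k - S1) \<le> E * M * S0r * r^k"
    proof -
      have "E * M * r^k * sr \<le> E * M * r^k * S0r"
        by (intro mult_left_mono sr(3)) (use E M r in auto)
      thus ?thesis using b1 by (simp add: mult_ac)
    qed
    have "imat_pow T (Suc l) j k - c (Suc l) (int j - int k) = (imat_pow T (Suc l) j k - S1) - S2"
      by (simp add: S12)
    also have "norm \<dots> \<le> norm (imat_pow T (Suc l) j k - S1) + norm S2" by (rule norm_triangle_ineq4)
    also have "\<dots> \<le> E * M * S0r * r^k + Cb^l * M / (1 - \<rho>) * r^k" using b1' b2' by linarith
    also have "\<dots> = E' * r^k" by (simp add: E'_def algebra_simps)
    finally show ?thesis .
  qed
  show ?case using E' main unfolding T_def by blast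
qed

end

lemma shift_pow:
  fixes a :: "int \<Rightarrow> complex"
  defines "T \<equiv> (\<lambda>j k. a (int j - int k))"
    and "Tp \<equiv> (\<lambda>j k. if 1 \<le> j \<and> 1 \<le> k then a (int j - int k) else 0)"
  shows "imat_pow Tp (Suc l) j k = (if 1 \<le> j \<and> 1 \<le> k then imat_pow T (Suc l) (j-1) (k-1) else 0)"
proof (induction l arbitrary: j k)
  case 0
  have "imat_pow Tp (Suc 0) j k = Tp j k" by (simp add: imat_mult_id_left)
  moreover have "imat_pow T (Suc 0) (j-1) (k-1) = T (j-1) (k-1)" by (simp add: imat_mult_id_left)
  moreover have "1 \<le> j \<Longrightarrow> 1 \<le> k \<Longrightarrow> T (j-1) (k-1) = a (int j - int k)"
    by (simp add: T_def of_nat_diff)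
  ultimately show ?case by (simp add: Tp_def)
next
  case (Suc l)
  have "imat_pow Tp (Suc (Suc l)) j k = (\<Sum>m. imat_pow Tp (Suc l) j m * Tp m k)"
    by (subst imat_pow.simps(2)) (simp only: imat_mult_def)
  also have "\<dots> = (\<Sum>m. if 1 \<le> j \<and> 1 \<le> k \<and> 1 \<le> m then imat_pow T (Suc l) (j-1) (m-1) * a (int m - int k) else 0)"
    by (rule arg_cong[where f = suminf], rule ext) (simp only: Suc.IH, simp add: Tp_def del: imat_pow.simps)
  also have "\<dots> = (if 1 \<le> j \<and> 1 \<le> k then imat_pow T (Suc (Suc l)) (j-1) (k-1) else 0)"
  proof (cases "1 \<le> j \<and> 1 \<le> k")
    case True
    have "(\<Sum>m. if 1 \<le> j \<and> 1 \<le> k \<and> 1 \<le> m then imat_pow T (Suc l) (j-1) (m-1) * a (int m - int k) else 0)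
        = (\<Sum>m. if 1 \<le> j \<and> 1 \<le> k \<and> 1 \<le> Suc m then imat_pow T (Suc l) (j-1) (Suc m-1) * a (int (Suc m) - int k) else 0)"
      by (rule suminf_shift0[symmetric]) simp
    also have "\<dots> = (\<Sum>m. imat_pow T (Suc l) (j-1) m * T m (k-1))"
      using True by (simp add: T_def of_nat_diff algebra_simps del: imat_pow.simps)
    also have "\<dots> = imat_pow T (Suc (Suc l)) (j-1) (k-1)"
      by (subst (2) imat_pow.simps(2)) (simp only: imat_mult_def)
    finally show ?thesis using True by simp
  next
    case False
    hence "(\<lambda>m. if 1 \<le> j \<and> 1 \<le> k \<and> 1 \<le> m then imat_pow T (Suc l) (j-1) (m-1) * a (int m - int k) else 0)
         = (\<lambda>m. 0)" by auto
    thus ?thesis using False by (auto simp del: imat_pow.simps)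
  qed
  finally show ?case .
qed

context
  fixes a :: "int \<Rightarrow> complex" and c :: "nat \<Rightarrow> int \<Rightarrow> complex" and r M Cb :: real
  assumes r: "0 < r" "r < 1" and M: "0 \<le> M" and Cb: "0 \<le> Cb"
    and abd: "\<And>n. norm (a n) \<le> M * (r^2) ^ nat \<bar>n\<bar>"
    and cbd: "\<And>l d. norm (c l d) \<le> Cb ^ l"
    and c0: "\<And>d. c 0 d = (if d = 0 then 1 else 0)"
    and crec: "\<And>l d. ((\<lambda>n. c l (d - n) * a n) has_sum c (Suc l) d) UNIV"
begin

lemma trace_sums:
  defines "T \<equiv> (\<lambda>j k. a (int j - int k))"
    and "Tp \<equiv> (\<lambda>j k. if 1 \<le> j \<and> 1 \<le> k then a (int j - int k) else 0)"
  assumes l: "1 \<le> l"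
  shows "(\<lambda>j. imat_pow T l j j - imat_pow Tp l j j) sums c l 0"
proof -
  obtain l' where l': "l = Suc l'" using l by (cases l) auto
  obtain E where E: "0 \<le> E" "\<And>j k. norm (imat_pow T l j k - c l (int j - int k)) \<le> E * r^k"
    using err_bound[OF r M Cb abd cbd c0 crec, of l] unfolding T_def by blast
  have sh: "imat_pow Tp l j j = (if 1 \<le> j then imat_pow T l (j-1) (j-1) else 0)" for j
    unfolding l' T_def Tp_def by (simp only: shift_pow) simp
  have tel: "(\<Sum>j<Suc N. imat_pow T l j j - imat_pow Tp l j j) = imat_pow T l N N" for N
  proof (induction N)
    case 0 thus ?case by (simp add: sh del: imat_pow.simps)
  next
    case (Suc N) thus ?case by (simp add: sh del: imat_pow.simps)
  qed
  have lim: "(\<lambda>N. imat_pow T l N N) \<longlonglongrightarrow> c l 0"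
  proof -
    have "(\<lambda>N. E * r^N) \<longlonglongrightarrow> E * 0" using r by (intro tendsto_intros LIMSEQ_power_zero) auto
    hence z: "(\<lambda>N. E * r^N) \<longlonglongrightarrow> 0" by simp
    have b: "norm (imat_pow T l N N - c l 0) \<le> E * r^N" for N using E(2)[of N N] by simp
    have "(\<lambda>N. imat_pow T l N N - c l 0) \<longlonglongrightarrow> 0"
      by (rule Lim_null_comparison[OF _ z]) (use b in \<open>auto intro!: always_eventually\<close>)
    thus ?thesis by (simp add: LIM_zero_iff)
  qed
  show ?thesis unfolding sums_def
    by (subst filterlim_sequentially_Suc[symmetric]) (simp only: tel lim)
qed

end

lemma measure_part:
  fixes f :: "real \<Rightarrow> real"
  assumes cf: "continuous_on UNIV f"
  defines "N \<equiv> density lborel (\<lambda>\<theta>. ennreal (indicator {0..2*pi} \<theta> / (2*pi)))"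
  defines "\<mu> \<equiv> distr N borel f"
  shows "finite_measure \<mu>" "sets \<mu> = sets borel"
    "\<And>c. measure \<mu> {..<c} = measure lborel {\<theta>\<in>{0..<2*pi}. f \<theta> < c} / (2*pi)"
    "\<And>l. (\<integral>x. x ^ l \<partial>\<mu>) = integral {0..2*pi} (\<lambda>\<theta>. f \<theta> ^ l) / (2*pi)"
proof -
  have fb: "f \<in> borel_measurable borel" by (rule borel_measurable_continuous_onI[OF cf])
  have fN: "f \<in> measurable N borel" using fb by (simp add: N_def)
  have emN: "emeasure N A = ennreal (1/(2*pi)) * emeasure lborel ({0..2*pi} \<inter> A)" if A: "A \<in> sets borel" for A
  proof -
    have "emeasure N A = (\<integral>\<^sup>+ \<theta>. ennreal (indicator {0..2*pi} \<theta> / (2*pi)) * indicator A \<theta> \<partial>lborel)"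
      unfolding N_def by (rule emeasure_density) (use A in auto)
    also have "\<dots> = (\<integral>\<^sup>+ \<theta>. ennreal (1/(2*pi)) * indicator ({0..2*pi} \<inter> A) \<theta> \<partial>lborel)"
      by (rule nn_integral_cong) (auto split: split_indicator)
    also have "\<dots> = ennreal (1/(2*pi)) * emeasure lborel ({0..2*pi} \<inter> A)"
      by (rule nn_integral_cmult_indicator) (use A in auto)
    finally show ?thesis .
  qed
  have spN: "space N = UNIV" by (simp add: N_def)
  have finN: "finite_measure N"
  proof
    have "emeasure N (space N) = ennreal (1/(2*pi)) * emeasure lborel {0..2*pi}"
      using emN[of UNIV] by (simp add: spN)
    also have "\<dots> = ennreal (1/(2*pi)) * ennreal (2*pi)" by simp
    finally show "emeasure N (space N) \<noteq> \<infinity>" by (simp add: ennreal_mult''[symmetric])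
  qed
  show fin: "finite_measure \<mu>" unfolding \<mu>_def
    by (rule finite_measure.finite_measure_distr[OF finN fN])
  show sets: "sets \<mu> = sets borel" by (simp add: \<mu>_def)
  show "measure \<mu> {..<c} = measure lborel {\<theta>\<in>{0..<2*pi}. f \<theta> < c} / (2*pi)" for c
  proof -
    have pre: "f -` {..<c} \<in> sets borel" using fb by (simp add: measurable_sets_borel)
    have "emeasure \<mu> {..<c} = emeasure N (f -` {..<c} \<inter> space N)"
      unfolding \<mu>_def by (rule emeasure_distr[OF fN]) simp
    also have "\<dots> = ennreal (1/(2*pi)) * emeasure lborel ({0..2*pi} \<inter> f -` {..<c})"
      using emN[OF pre] by (simp add: spN)
    also have "emeasure lborel ({0..2*pi} \<inter> f -` {..<c}) = emeasure lborel {\<theta>\<in>{0..<2*pi}. f \<theta> < c}"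
    proof (rule emeasure_eq_AE)
      show "AE x in lborel. (x \<in> {0..2*pi} \<inter> f -` {..<c}) = (x \<in> {\<theta> \<in> {0..<2*pi}. f \<theta> < c})"
        using AE_lborel_singleton[of "2*pi"] by eventually_elim auto
      show "{0..2*pi} \<inter> f -` {..<c} \<in> sets lborel" using pre by simp
      have "{\<theta> \<in> {0..<2*pi}. f \<theta> < c} = {0..<2*pi} \<inter> f -` {..<c}" by auto
      thus "{\<theta> \<in> {0..<2*pi}. f \<theta> < c} \<in> sets lborel" using pre by simp
    qed
    finally have e: "emeasure \<mu> {..<c} = ennreal (1/(2*pi)) * emeasure lborel {\<theta>\<in>{0..<2*pi}. f \<theta> < c}" .
    have "measure \<mu> {..<c} = enn2real (emeasure \<mu> {..<c})" by (simp add: measure_def)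
    also have "\<dots> = (1/(2*pi)) * enn2real (emeasure lborel {\<theta>\<in>{0..<2*pi}. f \<theta> < c})"
      by (simp add: e enn2real_mult)
    also have "\<dots> = measure lborel {\<theta>\<in>{0..<2*pi}. f \<theta> < c} / (2*pi)" by (simp add: measure_def)
    finally show ?thesis .
  qed
  show "(\<integral>x. x ^ l \<partial>\<mu>) = integral {0..2*pi} (\<lambda>\<theta>. f \<theta> ^ l) / (2*pi)" for l
  proof -
    have "(\<integral>x. x ^ l \<partial>\<mu>) = (\<integral>\<theta>. f \<theta> ^ l \<partial>N)"
      unfolding \<mu>_def by (rule integral_distr[OF fN]) simp
    also have "\<dots> = (\<integral>\<theta>. (indicator {0..2*pi} \<theta> / (2*pi)) *\<^sub>R f \<theta> ^ l \<partial>lborel)"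
      unfolding N_def by (rule integral_density) (use fb in auto)
    also have "\<dots> = (\<integral>\<theta>. (1/(2*pi)) * (indicator {0..2*pi} \<theta> *\<^sub>R f \<theta> ^ l) \<partial>lborel)"
      by (rule Bochner_Integration.integral_cong) (auto split: split_indicator)
    also have "\<dots> = (1/(2*pi)) * (\<integral>\<theta>. indicator {0..2*pi} \<theta> *\<^sub>R f \<theta> ^ l \<partial>lborel)"
      by (rule integral_mult_right_zero)
    also have "(\<integral>\<theta>. indicator {0..2*pi} \<theta> *\<^sub>R f \<theta> ^ l \<partial>lborel) = integral {0..2*pi} (\<lambda>\<theta>. f \<theta> ^ l)"
    proof -
      have si: "set_integrable lborel {0..2*pi} (\<lambda>\<theta>. f \<theta> ^ l)"
        unfolding set_integrable_def
        by (rule borel_integrable_compact) (auto intro!: continuous_intros continuous_on_subset[OF cf])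
      show ?thesis using set_borel_integral_eq_integral(2)[OF si] by (simp add: set_lebesgue_integral_def)
    qed
    finally show ?thesis by simp
  qed
qed

theorem corollary2p3:
  fixes v :: "complex \<Rightarrow> real"
  assumes "analytic_on_circle v"
  shows "\<exists>\<mu>::real measure. finite_measure \<mu> \<and> sets \<mu> = sets borel \<and>
           (\<forall>c. measure \<mu> {..<c} = ssf_claim v c) \<and>
           (\<forall>l::nat. l \<ge> 1 \<longrightarrow>
              (\<lambda>j. imat_pow (toeplitz_mat v) l j j - imat_pow (toeplitz_plus_mat v) l j j)
                sums complex_of_real (\<integral>c. c ^ l \<partial>\<mu>))"
proof -
  obtain \<rho> M where \<rho>: "0 < \<rho>" "\<rho> < 1" and M: "0 \<le> M"
    and abd: "\<And>n. norm (fourier_coeff v n) \<le> M * \<rho> ^ nat \<bar>n\<bar>"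
    and rep: "\<And>\<theta>. ((\<lambda>n. fourier_coeff v n * cis (of_int n * \<theta>)) has_sum complex_of_real (v (cis \<theta>))) UNIV"
    and contV: "continuous_on UNIV (\<lambda>\<theta>. complex_of_real (v (cis \<theta>)))"
    using fourier_rep[OF assms] by blast
  define V where "V = (\<lambda>\<theta>. complex_of_real (v (cis \<theta>)))"
  define f where "f = (\<lambda>\<theta>. v (cis \<theta>))"
  have contV': "continuous_on UNIV V" using contV by (simp add: V_def)
  have cf: "continuous_on UNIV f"
  proof -
    have "continuous_on UNIV (\<lambda>\<theta>. Re (V \<theta>))" by (intro continuous_intros contV')
    thus ?thesis by (simp add: V_def f_def)
  qed
  obtain Vb where Vb: "\<And>\<theta>. \<theta> \<in> {0..2*pi} \<Longrightarrow> norm (V \<theta>) \<le> Vb" and Vb0: "0 \<le> Vb"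
  proof -
    have "compact (V ` {0..2*pi})"
      by (rule compact_continuous_image[OF continuous_on_subset[OF contV']]) auto
    then obtain B where "B > 0" "\<And>x. x \<in> V ` {0..2*pi} \<Longrightarrow> norm x \<le> B"
      using compact_imp_bounded bounded_pos by metis
    thus ?thesis using that[of B] by auto
  qed
  define r where "r = sqrt \<rho>"
  have r: "0 < r" "r < 1" using \<rho> by (auto simp: r_def)
  have r2: "r^2 = \<rho>" using \<rho> by (simp add: r_def)
  have abd': "norm (fourier_coeff v n) \<le> M * (r^2) ^ nat \<bar>n\<bar>" for n using abd r2 by simp
  have rep': "((\<lambda>n. fourier_coeff v n * cis (of_int n * \<theta>)) has_sum V \<theta>) UNIV" for \<theta>
    using rep by (simp add: V_def)
  have \<rho>0: "0 \<le> \<rho>" using \<rho> by simp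
  have ts: "(\<lambda>j. imat_pow (\<lambda>j k. fourier_coeff v (int j - int k)) l j j -
        imat_pow (\<lambda>j k. if 1 \<le> j \<and> 1 \<le> k then fourier_coeff v (int j - int k) else 0) l j j) sums fc V l 0"
    if "1 \<le> l" for l
    by (rule trace_sums[OF r M Vb0 abd' fc_bound[OF contV' Vb] fc0 fc_rec[OF contV' Vb \<rho>0 \<rho>(2) M abd rep'] that])
  have tm: "toeplitz_mat v = (\<lambda>j k. fourier_coeff v (int j - int k))"
    by (simp add: fun_eq_iff toeplitz_mat_def)
  have tpm: "toeplitz_plus_mat v = (\<lambda>j k. if 1 \<le> j \<and> 1 \<le> k then fourier_coeff v (int j - int k) else 0)"
    by (simp add: fun_eq_iff toeplitz_plus_mat_def toeplitz_mat_def)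
  define N where "N = density lborel (\<lambda>\<theta>. ennreal (indicator {0..2*pi} \<theta> / (2*pi)))"
  define \<mu> where "\<mu> = distr N borel f"
  note mp = measure_part[OF cf, folded N_def, folded \<mu>_def]
  have fcl: "fc V l 0 = complex_of_real (\<integral>c. c ^ l \<partial>\<mu>)" for l
  proof -
    have int: "(\<lambda>\<theta>. f \<theta> ^ l) integrable_on {0..2*pi}"
      by (rule integrable_continuous_interval) (auto intro!: continuous_intros continuous_on_subset[OF cf])
    have "integral {0..2*pi} (\<lambda>\<theta>. complex_of_real (f \<theta> ^ l)) = complex_of_real (integral {0..2*pi} (\<lambda>\<theta>. f \<theta> ^ l))"
      by (rule integral_unique, rule has_integral_of_real, rule integrable_integral[OF int])
    moreover have "fc V l 0 = integral {0..2*pi} (\<lambda>\<theta>. complex_of_real (f \<theta> ^ l)) / complex_of_real (2*pi)"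
      by (simp add: fc_def V_def f_def)
    ultimately show ?thesis using mp(4)[of l] by simp
  qed
  show ?thesis
  proof (intro exI[of _ \<mu>] conjI allI impI)
    show "finite_measure \<mu>" by (rule mp(1))
    show "sets \<mu> = sets borel" by (rule mp(2))
    show "measure \<mu> {..<c} = ssf_claim v c" for c by (simp add: mp(3) ssf_claim_def f_def)
    show "(\<lambda>j. imat_pow (toeplitz_mat v) l j j - imat_pow (toeplitz_plus_mat v) l j j)
                sums complex_of_real (\<integral>c. c ^ l \<partial>\<mu>)" if "1 \<le> l" for l
      using ts[OF that] unfolding tm tpm fcl .
  qed
qed

end
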